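(* Let $N<M$ be positive integers and $p=1/M$. Let $k,\lambda$ be non-negative integers with $k+\lambda+1<M$. Then $$P_{\lambda}(A_{N,p}=k)=(\lambda+1)\binom{N}{k}p^k\bigl(1-(k+1+\lambda)p\bigr)^{N-k}(k+1+\lambda)^{k-1},$$ and $$P\bigl(A_{N,p}(T_\lambda(\omega))=k,\ Y_M(\omega)=0\bigr)=\lambda\binom{N}{k}p^k\bigl(1-(k+1+\lambda)p\bigr)^{N-k}(k+\lambda)^{k-1}.$$
   Context: A configuration $\omega$ of the $(N,p)$ BB space is an assignment to each neuron $j\in\{1,\dots,N\}$ of an energy level $E_j(\omega)\in\{1,\dots,M\}$ (equivalently a $0/1$ matrix $(a_{i,j})_{i\le M,j\le N}$ with exactly one $1$ in each column, $a_{i,j}=1$ iff $E_j=i$). Let $Y_i(\omega)=\#\{j: E_j(\omega)=i\}$. The avalanche size is $A_{N,p}(\omega)=\inf\{i\ge 0:\ \sum_{j=M-i}^{M}Y_j(\omega)\le i\}$. The uniform measure $P$ makes the levels $E_1,\dots,E_N$ i.i.d. uniform on $\{1,\dots,M\}$. For an integer $\lambda\ge0$, the map $T_\lambda$ on configurations is defined by: if $E_j(\omega)\ge M-\lambda$ then $E_j(T_\lambda(\omega))=M$; if $E_j(\omega)<M-\lambda$ then $E_j(T_\lambda(\omega))=E_j(\omega)+\lambda$. $P_\lambda$ is the pushforward of $P$ under $T_\lambda$. *)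

theory Defs
  imports "HOL-Probability.Probability"
begin

text \<open>Configurations of the (N,p) BB space, p = 1/M: energy level E j in {1..M}
  for each neuron j in {1..N} (extensional functions, undefined outside {1..N}).\<close>
definition configs :: "nat \<Rightarrow> nat \<Rightarrow> (nat \<Rightarrow> nat) set" where
  "configs N M = PiE {1..N} (\<lambda>_. {1..M})"

definition Ycount :: "nat \<Rightarrow> (nat \<Rightarrow> nat) \<Rightarrow> nat \<Rightarrow> nat" where
  "Ycount N E i = card {j \<in> {1..N}. E j = i}"

definition avalanche :: "nat \<Rightarrow> nat \<Rightarrow> (nat \<Rightarrow> nat) \<Rightarrow> nat" where
  "avalanche N M E = (LEAST i. (\<Sum>j\<in>{M - i..M}. Ycount N E j) \<le> i)"

definition Tmap :: "nat \<Rightarrow> nat \<Rightarrow> nat \<Rightarrow> (nat \<Rightarrow> nat) \<Rightarrow> (nat \<Rightarrow> nat)" where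
  "Tmap N M l E = restrict (\<lambda>j. if int (E j) \<ge> int M - int l then M else E j + l) {1..N}"

definition Punif :: "nat \<Rightarrow> nat \<Rightarrow> (nat \<Rightarrow> nat) pmf" where
  "Punif N M = pmf_of_set (configs N M)"

definition Plam :: "nat \<Rightarrow> nat \<Rightarrow> nat \<Rightarrow> (nat \<Rightarrow> nat) pmf" where
  "Plam N M l = map_pmf (Tmap N M l) (Punif N M)"

end

theory Submission
  imports Defs
begin


definition pf :: "nat \<Rightarrow> 'a set \<Rightarrow> ('a \<Rightarrow> nat) set" where
  "pf a S = {f \<in> S \<rightarrow>\<^sub>E {0..a + card S}. \<forall>i<card S. i+1 \<le> card {j\<in>S. f j \<le> a+i}}"

lemma split_count:
  fixes S :: "'a set" and B C :: "'b set"
  assumes fS: "finite S" and fB: "finite B" and fC: "finite C" and disj: "B \<inter> C = {}"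
    and eqv: "\<And>f. f \<in> S \<rightarrow>\<^sub>E (B \<union> C) \<Longrightarrow> P f \<longleftrightarrow>
       Q {j\<in>S. f j \<in> B} (restrict f {j\<in>S. f j \<in> B}) \<and> R {j\<in>S. f j \<in> B} (restrict f (S - {j\<in>S. f j \<in> B}))"
  shows "card {f \<in> S \<rightarrow>\<^sub>E (B \<union> C). P f}
     = (\<Sum>T\<in>Pow S. card {g \<in> T \<rightarrow>\<^sub>E B. Q T g} * card {h \<in> (S-T) \<rightarrow>\<^sub>E C. R T h})"
proof -
  define X where "X T = {f \<in> S \<rightarrow>\<^sub>E (B \<union> C). {j\<in>S. f j \<in> B} = T \<and> Q T (restrict f T) \<and> R T (restrict f (S-T))}" for T
  have U: "{f \<in> S \<rightarrow>\<^sub>E (B \<union> C). P f} = (\<Union>T\<in>Pow S. X T)"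
    using eqv unfolding X_def by auto
  have finX: "finite (X T)" for T
  proof -
    have "finite (S \<rightarrow>\<^sub>E (B \<union> C))" using fS fB fC by (simp add: finite_PiE)
    then show ?thesis unfolding X_def by auto
  qed
  have cU: "card (\<Union>T\<in>Pow S. X T) = (\<Sum>T\<in>Pow S. card (X T))"
    by (rule card_UN_disjoint) (use fS finX in \<open>auto simp: X_def\<close>)
  have cX: "card (X T) = card {g \<in> T \<rightarrow>\<^sub>E B. Q T g} * card {h \<in> (S-T) \<rightarrow>\<^sub>E C. R T h}"
    if TS: "T \<subseteq> S" for T
  proof -
    have "bij_betw (\<lambda>f. (restrict f T, restrict f (S-T))) (X T)
           ({g \<in> T \<rightarrow>\<^sub>E B. Q T g} \<times> {h \<in> (S-T) \<rightarrow>\<^sub>E C. R T h})"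
    proof (rule bij_betw_byWitness[where f'="\<lambda>(g,h) j. if j \<in> T then g j else h j"])
      show "\<forall>a\<in>X T. (\<lambda>(g, h) j. if j \<in> T then g j else h j) (restrict a T, restrict a (S - T)) = a"
        unfolding X_def using TS by (auto simp: PiE_def extensional_def fun_eq_iff)
      show "\<forall>a'\<in>{g \<in> T \<rightarrow>\<^sub>E B. Q T g} \<times> {h \<in> (S-T) \<rightarrow>\<^sub>E C. R T h}.
             (\<lambda>f. (restrict f T, restrict f (S - T))) ((\<lambda>(g, h) j. if j \<in> T then g j else h j) a') = a'"
        by (auto simp: PiE_def extensional_def fun_eq_iff)
      show "(\<lambda>f. (restrict f T, restrict f (S - T))) ` X T \<subseteq> {g \<in> T \<rightarrow>\<^sub>E B. Q T g} \<times> {h \<in> (S-T) \<rightarrow>\<^sub>E C. R T h}"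
        unfolding X_def by (auto simp: PiE_def extensional_def)
      show "(\<lambda>(g, h) j. if j \<in> T then g j else h j) ` ({g \<in> T \<rightarrow>\<^sub>E B. Q T g} \<times> {h \<in> (S-T) \<rightarrow>\<^sub>E C. R T h}) \<subseteq> X T"
      proof (rule image_subsetI)
        fix gh assume "gh \<in> {g \<in> T \<rightarrow>\<^sub>E B. Q T g} \<times> {h \<in> (S-T) \<rightarrow>\<^sub>E C. R T h}"
        then obtain g h where gh: "gh = (g,h)" and g: "g \<in> T \<rightarrow>\<^sub>E B" "Q T g" and h: "h \<in> (S-T) \<rightarrow>\<^sub>E C" "R T h" by auto
        define f where "f = (\<lambda>j. if j \<in> T then g j else h j)"
        have "restrict f T = g" using g unfolding f_def by (auto simp: PiE_def extensional_def fun_eq_iff)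
        moreover have "restrict f (S-T) = h" using h unfolding f_def by (auto simp: PiE_def extensional_def fun_eq_iff)
        moreover have "f \<in> S \<rightarrow>\<^sub>E (B \<union> C)" using g h TS unfolding f_def by (auto simp: PiE_def extensional_def Pi_def)
        moreover have "{j\<in>S. f j \<in> B} = T" using g h TS disj unfolding f_def by (auto simp: PiE_def)
        ultimately show "(\<lambda>(g, h) j. if j \<in> T then g j else h j) gh \<in> X T"
          unfolding X_def using g h gh by (simp add: f_def)
      qed
    qed
    then show ?thesis by (simp add: bij_betw_same_card card_cartesian_product)
  qed
  show ?thesis unfolding U cU by (rule sum.cong[OF refl]) (simp add: cX)
qed

lemma card_PiE_transform:
  assumes "\<And>x. x\<in>A \<Longrightarrow> \<phi> x \<in> B" "\<And>y. y\<in>B \<Longrightarrow> \<psi> y \<in> A"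
    "\<And>x. x\<in>A \<Longrightarrow> \<psi> (\<phi> x) = x" "\<And>y. y\<in>B \<Longrightarrow> \<phi> (\<psi> y) = y"
    and "\<And>f. f \<in> I \<rightarrow>\<^sub>E A \<Longrightarrow> P f \<longleftrightarrow> Q (restrict (\<phi> \<circ> f) I)"
  shows "card {f \<in> I \<rightarrow>\<^sub>E A. P f} = card {g \<in> I \<rightarrow>\<^sub>E B. Q g}"
proof -
  have "bij_betw (\<lambda>f. restrict (\<phi> \<circ> f) I) {f \<in> I \<rightarrow>\<^sub>E A. P f} {g \<in> I \<rightarrow>\<^sub>E B. Q g}"
  proof (rule bij_betw_byWitness[where f'="\<lambda>g. restrict (\<psi> \<circ> g) I"])
    show "\<forall>a\<in>{f \<in> I \<rightarrow>\<^sub>E A. P f}. restrict (\<psi> \<circ> restrict (\<phi> \<circ> a) I) I = a"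
      using assms(3) by (auto simp: PiE_def extensional_def fun_eq_iff Pi_def)
    show "\<forall>a'\<in>{g \<in> I \<rightarrow>\<^sub>E B. Q g}. restrict (\<phi> \<circ> restrict (\<psi> \<circ> a') I) I = a'"
      using assms(4) by (auto simp: PiE_def extensional_def fun_eq_iff Pi_def)
    show "(\<lambda>f. restrict (\<phi> \<circ> f) I) ` {f \<in> I \<rightarrow>\<^sub>E A. P f} \<subseteq> {g \<in> I \<rightarrow>\<^sub>E B. Q g}"
      using assms(1,5) by (auto simp: PiE_def Pi_def)
    show "(\<lambda>g. restrict (\<psi> \<circ> g) I) ` {g \<in> I \<rightarrow>\<^sub>E B. Q g} \<subseteq> {f \<in> I \<rightarrow>\<^sub>E A. P f}"
    proof (rule image_subsetI)
      fix g assume "g \<in> {g \<in> I \<rightarrow>\<^sub>E B. Q g}"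
      then have g: "g \<in> I \<rightarrow>\<^sub>E B" "Q g" by auto
      have r: "restrict (\<psi> \<circ> g) I \<in> I \<rightarrow>\<^sub>E A" using g assms(2) by (auto simp: PiE_def Pi_def)
      have "restrict (\<phi> \<circ> restrict (\<psi> \<circ> g) I) I = g"
        using g assms(4) by (auto simp: PiE_def extensional_def fun_eq_iff Pi_def)
      then show "restrict (\<psi> \<circ> g) I \<in> {f \<in> I \<rightarrow>\<^sub>E A. P f}" using assms(5)[OF r] g r by simp
    qed
  qed
  then show ?thesis by (rule bij_betw_same_card)
qed

lemma sum_Pow_card:
  assumes "finite S"
  shows "(\<Sum>T\<in>Pow S. g (card T)) = (\<Sum>m\<le>card S. (card S choose m) * (g m :: nat))"
proof -
  have "(\<Sum>T\<in>Pow S. g (card T)) = (\<Sum>m\<in>{..card S}. \<Sum>T\<in>{T\<in>Pow S. card T = m}. g (card T))"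
    by (rule sum.group[symmetric]) (use assms in \<open>auto simp: card_mono\<close>)
  also have "\<dots> = (\<Sum>m\<le>card S. (card S choose m) * g m)"
  proof (rule sum.cong[OF refl])
    fix m
    have "(\<Sum>T\<in>{T\<in>Pow S. card T = m}. g (card T)) = (\<Sum>T\<in>{T\<in>Pow S. card T = m}. g m)" by simp
    also have "\<dots> = card {T\<in>Pow S. card T = m} * g m" by simp
    also have "{T\<in>Pow S. card T = m} = {T. T \<subseteq> S \<and> card T = m}" by auto
    finally show "(\<Sum>T\<in>{T\<in>Pow S. card T = m}. g (card T)) = (card S choose m) * g m"
      using n_subsets[OF assms] by simp
  qed
  finally show ?thesis .
qed

lemma abel_like:
  "(\<Sum>m\<le>Suc n. (Suc n choose m) * (x^m * m * (Suc n)^(Suc n - m))) = Suc n * x * (x + Suc n)^n"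
proof -
  have "(\<Sum>m\<le>Suc n. (Suc n choose m) * (x^m * m * (Suc n)^(Suc n - m)))
     = (\<Sum>j\<le>n. (Suc n choose Suc j) * (x^Suc j * Suc j * (Suc n)^(n - j)))"
    by (subst sum.atMost_Suc_shift) simp
  also have "\<dots> = (\<Sum>j\<le>n. Suc n * x * ((n choose j) * x^j * (Suc n)^(n - j)))"
  proof (rule sum.cong[OF refl])
    fix j
    have e: "(Suc n choose Suc j) * Suc j = Suc n * (n choose j)"
      by (metis Suc_times_binomial mult.commute)
    have "(Suc n choose Suc j) * (x^Suc j * Suc j * (Suc n)^(n - j)) = ((Suc n choose Suc j) * Suc j) * (x * (x^j * (Suc n)^(n - j)))"
      by (simp only: power_Suc mult_ac)
    also have "\<dots> = (Suc n * (n choose j)) * (x * (x^j * (Suc n)^(n - j)))" by (simp only: e)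
    also have "\<dots> = Suc n * x * ((n choose j) * x^j * (Suc n)^(n - j))" by (simp only: mult_ac)
    finally show "(Suc n choose Suc j) * (x^Suc j * Suc j * (Suc n)^(n - j)) = Suc n * x * ((n choose j) * x^j * (Suc n)^(n - j))" .
  qed
  also have "\<dots> = Suc n * x * (\<Sum>j\<le>n. (n choose j) * x^j * (Suc n)^(n - j))"
    by (simp add: sum_distrib_left)
  also have "\<dots> = Suc n * x * (x + Suc n)^n"
    by (subst binomial_ring) simp
  finally show ?thesis .
qed



lemma pf_empty: "card (pf a {}) = 1"
  unfolding pf_def by simp

lemma card_restrict_eq:
  "card {j\<in>A. P (restrict f A j)} = card {j\<in>A. P (f j)}"
  by (rule arg_cong[where f=card]) auto

lemma pf_rec:
  assumes fS: "finite S" and ne: "S \<noteq> {}"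
  shows "card (pf a S) = (\<Sum>T\<in>Pow S. (if T = {} then 0 else (a+1)^card T * card (pf (card T - 1) (S - T))))"
proof -
  define k where "k = card S"
  have k1: "k \<ge> 1" using fS ne k_def by (simp add: Suc_leI card_gt_0_iff)
  define R where "R T h \<longleftrightarrow> (\<forall>i<k - card T. i+1 \<le> card {j\<in>S-T. h j \<le> a + card T + i})" for T and h :: "'a \<Rightarrow> nat"
  have un: "{0..a+k} = {0..a} \<union> {a+1..a+k}" by auto
  have pfS: "pf a S = {f \<in> S \<rightarrow>\<^sub>E ({0..a} \<union> {a+1..a+k}). \<forall>i<k. i+1 \<le> card {j\<in>S. f j \<le> a+i}}"
    unfolding pf_def k_def[symmetric] un ..
  have "card (pf a S) = (\<Sum>T\<in>Pow S. card {g \<in> T \<rightarrow>\<^sub>E {0..a}. T \<noteq> {}} * card {h \<in> (S-T) \<rightarrow>\<^sub>E {a+1..a+k}. R T h})"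
    unfolding pfS
  proof (rule split_count)
    fix f assume f: "f \<in> S \<rightarrow>\<^sub>E {0..a} \<union> {a + 1..a + k}"
    define T where "T = {j \<in> S. f j \<in> {0..a}}"
    have TS: "T \<subseteq> S" unfolding T_def by auto
    have fT: "finite T" using TS fS finite_subset by blast
    have cS: "card {j\<in>S. f j \<le> a+i} = card T + card {j\<in>S-T. f j \<le> a+i}" for i
    proof -
      have "{j\<in>S. f j \<le> a+i} = T \<union> {j\<in>S-T. f j \<le> a+i}" unfolding T_def by auto
      moreover have "T \<inter> {j\<in>S-T. f j \<le> a+i} = {}" by auto
      ultimately show ?thesis using fT fS by (simp add: card_Un_disjoint)
    qed
    have cR: "card {j\<in>S-T. restrict f (S-T) j \<le> c} = card {j\<in>S-T. f j \<le> c}" for c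
      by (rule card_restrict_eq)
    have ck: "card T \<le> k" unfolding k_def using TS fS by (simp add: card_mono)
    show "(\<forall>i<k. i+1 \<le> card {j\<in>S. f j \<le> a+i}) \<longleftrightarrow>
       (T \<noteq> {}) \<and> R T (restrict f (S - T))"
      unfolding T_def[symmetric] R_def cR
    proof (rule iffI)
      assume H: "\<forall>i<k. i+1 \<le> card {j\<in>S. f j \<le> a+i}"
      show "T \<noteq> {} \<and> (\<forall>i<k - card T. i + 1 \<le> card {j \<in> S - T. f j \<le> a + card T + i})"
      proof (intro conjI allI impI)
        from H k1 have "1 \<le> card {j\<in>S. f j \<le> a+0}" by auto
        moreover have "{j\<in>S. f j \<le> a} = T" unfolding T_def by auto
        ultimately show "T \<noteq> {}" by auto
      next
        fix i assume "i < k - card T"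
        with H have "card T + i + 1 \<le> card {j\<in>S. f j \<le> a+(card T + i)}" by auto
        then show "i + 1 \<le> card {j \<in> S - T. f j \<le> a + card T + i}" using cS[of "card T + i"] by (simp add: add.assoc)
      qed
    next
      assume "T \<noteq> {} \<and> (\<forall>i<k - card T. i + 1 \<le> card {j \<in> S - T. f j \<le> a + card T + i})"
      then have H1: "\<forall>i<k - card T. i + 1 \<le> card {j \<in> S - T. f j \<le> a + card T + i}" by blast
      show "\<forall>i<k. i+1 \<le> card {j\<in>S. f j \<le> a+i}"
      proof (intro allI impI)
      fix i assume H2: "i < k"
      note H = H1 H2
      have "i+1 \<le> card T + card {j\<in>S-T. f j \<le> a+i}"
      proof (cases "i < card T")
        case True thus ?thesis by simp
      next
        case False
        then have "i - card T < k - card T" using H(2) by simp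
        with H(1) have "i - card T + 1 \<le> card {j\<in>S-T. f j \<le> a + card T + (i - card T)}" by blast
        moreover have "a + card T + (i - card T) = a+i" using False by simp
        ultimately show ?thesis by simp
      qed
      then show "i+1 \<le> card {j\<in>S. f j \<le> a+i}" using cS[of i] by simp
      qed
    qed
  next
    show "finite S" by (rule fS)
  next
    show "finite {0..a}" by simp
  next
    show "finite {a+1..a+k}" by simp
  next
    show "{0..a} \<inter> {a+1..a+k} = {}" by auto
  qed
  also have "\<dots> = (\<Sum>T\<in>Pow S. (if T = {} then 0 else (a+1)^card T * card (pf (card T - 1) (S - T))))"
  proof (rule sum.cong[OF refl])
    fix T assume "T \<in> Pow S"
    then have TS: "T \<subseteq> S" by auto
    have fT: "finite T" using TS fS finite_subset by blast
    show "card {g \<in> T \<rightarrow>\<^sub>E {0..a}. T \<noteq> {}} * card {h \<in> (S-T) \<rightarrow>\<^sub>E {a+1..a+k}. R T h}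
        = (if T = {} then 0 else (a+1)^card T * card (pf (card T - 1) (S - T)))"
    proof (cases "T = {}")
      case True then show ?thesis by simp
    next
      case False
      have m1: "card T \<ge> 1" using False fT by (simp add: Suc_leI card_gt_0_iff)
      have ck: "card T \<le> k" unfolding k_def using TS fS by (simp add: card_mono)
      have cST: "card (S - T) = k - card T" unfolding k_def using TS fS fT by (simp add: card_Diff_subset)
      have e1: "card {g \<in> T \<rightarrow>\<^sub>E {0..a}. T \<noteq> {}} = (a+1)^card T"
        using False fT by (simp add: card_funcsetE)
      have e2: "card {h \<in> (S-T) \<rightarrow>\<^sub>E {a+1..a+k}. R T h} = card (pf (card T - 1) (S - T))"
        unfolding pf_def cST
      proof (rule card_PiE_transform[where \<phi>="\<lambda>x. x - (a+1)" and \<psi>="\<lambda>y. y + (a+1)"])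
        fix h assume h: "h \<in> S - T \<rightarrow>\<^sub>E {a + 1..a + k}"
        have "card {j \<in> S - T. h j \<le> a + card T + i} =
              card {j \<in> S - T. restrict ((\<lambda>x. x - (a + 1)) \<circ> h) (S - T) j \<le> card T - 1 + i}" for i
        proof (rule arg_cong[where f=card])
          show "{j \<in> S - T. h j \<le> a + card T + i} =
              {j \<in> S - T. restrict ((\<lambda>x. x - (a + 1)) \<circ> h) (S - T) j \<le> card T - 1 + i}"
            using h m1 by (auto simp: PiE_def Pi_def)
        qed
        then show "R T h \<longleftrightarrow> (\<forall>i<k - card T. i + 1 \<le>
              card {j \<in> S - T. restrict ((\<lambda>x. x - (a + 1)) \<circ> h) (S - T) j \<le> card T - 1 + i})"
          unfolding R_def by simp
      qed (use m1 ck in auto)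
      show ?thesis using e1 e2 False by simp
    qed
  qed
  finally show ?thesis .
qed

lemma pf_card:
  assumes "finite S"
  shows "card (pf a S) = (if S = {} then 1 else (a+1)*(a+card S+1)^(card S - 1))"
  using assms
proof (induction "card S" arbitrary: a S rule: less_induct)
  case less
  show ?case
  proof (cases "S = {}")
    case True then show ?thesis by (simp add: pf_empty)
  next
    case False
    define k where "k = card S"
    have k1: "k \<ge> 1" using less.prems False k_def by (simp add: Suc_leI card_gt_0_iff)
    define h where "h m = (a+1)^m * m * k^(k-m)" for m
    have "k * card (pf a S) = (\<Sum>T\<in>Pow S. k * (if T = {} then 0 else (a+1)^card T * card (pf (card T - 1) (S - T))))"
      using pf_rec[OF less.prems False] by (simp add: sum_distrib_left)
    also have "\<dots> = (\<Sum>T\<in>Pow S. h (card T))"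
    proof (rule sum.cong[OF refl])
      fix T assume "T \<in> Pow S"
      then have TS: "T \<subseteq> S" by auto
      have fT: "finite T" using TS less.prems finite_subset by blast
      show "k * (if T = {} then 0 else (a+1)^card T * card (pf (card T - 1) (S - T))) = h (card T)"
      proof (cases "T = {}")
        case True then show ?thesis by (simp add: h_def)
      next
        case TF: False
        have m1: "card T \<ge> 1" using TF fT by (simp add: Suc_leI card_gt_0_iff)
        have ck: "card T \<le> k" unfolding k_def using TS less.prems by (simp add: card_mono)
        have cST: "card (S - T) = k - card T" unfolding k_def using TS less.prems fT by (simp add: card_Diff_subset)
        have lt: "card (S - T) < card S" using cST m1 k1 k_def by simp
        have IH: "card (pf (card T - 1) (S - T)) = (if S - T = {} then 1 else (card T - 1 + 1)*(card T - 1 + card (S-T) + 1)^(card (S-T) - 1))"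
          using less.hyps[OF lt] less.prems by simp
        have "k * card (pf (card T - 1) (S - T)) = card T * k^(k - card T)"
        proof (cases "S - T = {}")
          case True
          then have "T = S" using TS by auto
          then show ?thesis using IH k_def by simp
        next
          case False
          then have "card (S - T) \<ge> 1" using less.prems by (simp add: Suc_leI card_gt_0_iff)
          then have "k - card T \<ge> 1" using cST by simp
          moreover have "card T - 1 + card (S-T) + 1 = k" using cST m1 ck by simp
          ultimately show ?thesis using False IH cST m1
            by (metis (no_types, lifting) Nat.le_imp_diff_is_add add.commute mult.left_commute power_Suc add_diff_cancel_left' plus_1_eq_Suc)
        qed
        then show ?thesis using TF by (simp add: h_def mult_ac)
      qed
    qed
    also have "\<dots> = (\<Sum>m\<le>k. (k choose m) * h m)"
      unfolding k_def by (rule sum_Pow_card[OF less.prems])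
    also have "\<dots> = k * (a+1) * (a+1+k)^(k-1)"
      using abel_like[of "k-1" "a+1"] k1 unfolding h_def by simp
    finally have "k * card (pf a S) = k * ((a+1) * (a+k+1)^(k-1))" by (simp add: algebra_simps)
    then show ?thesis using k1 False k_def by simp
  qed
qed



lemma least_char:
  fixes G :: "nat \<Rightarrow> nat"
  assumes "G n \<le> n"
  shows "(LEAST i. G i \<le> i) = k \<longleftrightarrow> G k \<le> k \<and> (\<forall>i<k. i < G i)"
proof
  assume L: "(LEAST i. G i \<le> i) = k"
  have "G (LEAST i. G i \<le> i) \<le> (LEAST i. G i \<le> i)" by (rule LeastI[of _ n]) (rule assms)
  moreover have "\<forall>i<k. i < G i" using not_less_Least[of _ "\<lambda>i. G i \<le> i"] L by (metis not_le)
  ultimately show "G k \<le> k \<and> (\<forall>i<k. i < G i)" using L by simp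
next
  assume H: "G k \<le> k \<and> (\<forall>i<k. i < G i)"
  show "(LEAST i. G i \<le> i) = k"
    by (rule Least_equality) (use H in \<open>auto simp: not_less[symmetric]\<close>)
qed

lemma count_generic:
  fixes N U l k :: nat
  assumes "k + l < U"
  shows "card {f \<in> {1..N} \<rightarrow>\<^sub>E {1..U}. card {j\<in>{1..N}. U \<le> f j + l + k} \<le> k
            \<and> (\<forall>i<k. i < card {j\<in>{1..N}. U \<le> f j + l + i})}
       = (N choose k) * (if k = 0 then 1 else (l+1)*(l+k+1)^(k-1)) * (U-l-k-1)^(N-k)"
proof -
  define S where "S = {1..N::nat}"
  define B where "B = {U-l-k..U}"
  define C where "C = {1..U-l-k-1}"
  define c where "c = (if k = 0 then 1 else (l+1)*(l+k+1)^(k-1))"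
  have fS: "finite S" unfolding S_def by simp
  have BC: "{1..U} = B \<union> C" unfolding B_def C_def using assms by auto
  have "card {f \<in> S \<rightarrow>\<^sub>E (B \<union> C). card {j\<in>S. U \<le> f j + l + k} \<le> k
            \<and> (\<forall>i<k. i < card {j\<in>S. U \<le> f j + l + i})}
     = (\<Sum>T\<in>Pow S. card {g \<in> T \<rightarrow>\<^sub>E B. card T = k \<and> (\<forall>i<k. i+1 \<le> card {j\<in>T. U \<le> g j + l + i})}
          * card {h \<in> (S-T) \<rightarrow>\<^sub>E C. True})"
  proof (rule split_count)
    fix f assume f: "f \<in> S \<rightarrow>\<^sub>E B \<union> C"
    define T where "T = {j \<in> S. f j \<in> B}"
    have fT: "finite T" unfolding T_def using fS by simp
    have fle: "j \<in> S \<Longrightarrow> f j \<le> U" for j using f assms unfolding B_def C_def by (auto simp: PiE_def Pi_def)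
    have Teq: "T = {j\<in>S. U \<le> f j + l + k}" unfolding T_def B_def using fle by fastforce
    have Gi: "{j\<in>S. U \<le> f j + l + i} = {j\<in>T. U \<le> restrict f T j + l + i}" if "i \<le> k" for i
      using that unfolding Teq by auto
    have mono: "card {j\<in>S. U \<le> f j + l + i} \<le> card {j\<in>S. U \<le> f j + l + k}" if "i \<le> k" for i
      by (rule card_mono) (use fS that in auto)
    show "(card {j\<in>S. U \<le> f j + l + k} \<le> k \<and> (\<forall>i<k. i < card {j\<in>S. U \<le> f j + l + i})) \<longleftrightarrow>
      (card T = k \<and> (\<forall>i<k. i+1 \<le> card {j\<in>T. U \<le> restrict f T j + l + i})) \<and> True"
      unfolding T_def[symmetric]
    proof (rule iffI)
      assume H: "card {j\<in>S. U \<le> f j + l + k} \<le> k \<and> (\<forall>i<k. i < card {j\<in>S. U \<le> f j + l + i})"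
      have c1: "card T \<le> k" using H Teq by simp
      have "card T = k"
      proof (cases k)
        case 0 then show ?thesis using H Teq by simp
      next
        case (Suc k')
        then have "k' < card {j\<in>S. U \<le> f j + l + k'}" using H by simp
        moreover have "card {j\<in>S. U \<le> f j + l + k'} \<le> card T" using mono[of k'] Suc Teq by simp
        ultimately show ?thesis using c1 Suc by linarith
      qed
      moreover have "\<forall>i<k. i+1 \<le> card {j\<in>T. U \<le> restrict f T j + l + i}"
      proof (intro allI impI)
        fix i assume i: "i < k"
        then have "i < card {j\<in>S. U \<le> f j + l + i}" using H by blast
        moreover have "{j\<in>S. U \<le> f j + l + i} = {j\<in>T. U \<le> restrict f T j + l + i}" using Gi i by simp
        ultimately show "i+1 \<le> card {j\<in>T. U \<le> restrict f T j + l + i}" by simp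
      qed
      ultimately show "(card T = k \<and> (\<forall>i<k. i+1 \<le> card {j\<in>T. U \<le> restrict f T j + l + i})) \<and> True" by simp
    next
      assume H: "(card T = k \<and> (\<forall>i<k. i+1 \<le> card {j\<in>T. U \<le> restrict f T j + l + i})) \<and> True"
      show "card {j\<in>S. U \<le> f j + l + k} \<le> k \<and> (\<forall>i<k. i < card {j\<in>S. U \<le> f j + l + i})"
      proof (intro conjI allI impI)
        show "card {j\<in>S. U \<le> f j + l + k} \<le> k" using H Teq by simp
      next
        fix i assume i: "i < k"
        then have "i+1 \<le> card {j\<in>T. U \<le> restrict f T j + l + i}" using H by blast
        moreover have "{j\<in>S. U \<le> f j + l + i} = {j\<in>T. U \<le> restrict f T j + l + i}" using Gi i by simp
        ultimately show "i < card {j\<in>S. U \<le> f j + l + i}" by simp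
      qed
    qed
  qed (use fS in \<open>auto simp: B_def C_def\<close>)
  also have "\<dots> = (\<Sum>T\<in>Pow S. (if card T = k then c else 0) * (U-l-k-1)^(N - card T))"
  proof (rule sum.cong[OF refl])
    fix T assume "T \<in> Pow S"
    then have TS: "T \<subseteq> S" by auto
    have fT: "finite T" using TS fS finite_subset by blast
    have cST: "card (S - T) = N - card T" using TS fT unfolding S_def by (simp add: card_Diff_subset)
    have e2: "card {h \<in> (S-T) \<rightarrow>\<^sub>E C. True} = (U-l-k-1)^(N - card T)"
      using fS cST by (simp add: card_funcsetE C_def)
    have e1: "card {g \<in> T \<rightarrow>\<^sub>E B. card T = k \<and> (\<forall>i<k. i+1 \<le> card {j\<in>T. U \<le> g j + l + i})}
        = (if card T = k then c else 0)"
    proof (cases "card T = k")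
      case False then show ?thesis by simp
    next
      case True
      have "card {g \<in> T \<rightarrow>\<^sub>E B. card T = k \<and> (\<forall>i<k. i+1 \<le> card {j\<in>T. U \<le> g j + l + i})}
          = card (pf l T)"
        unfolding pf_def B_def
      proof (rule card_PiE_transform[where \<phi>="\<lambda>x. U - x" and \<psi>="\<lambda>y. U - y"])
        fix g assume g: "g \<in> T \<rightarrow>\<^sub>E {U - l - k..U}"
        have "card {j\<in>T. U \<le> g j + l + i} = card {j\<in>T. restrict ((-) U \<circ> g) T j \<le> l + i}" for i
          by (rule arg_cong[where f=card]) (use g in \<open>auto simp: PiE_def Pi_def\<close>)
        then show "(card T = k \<and> (\<forall>i<k. i + 1 \<le> card {j \<in> T. U \<le> g j + l + i})) =
             (\<forall>i<card T. i + 1 \<le> card {j \<in> T. restrict ((-) U \<circ> g) T j \<le> l + i})"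
          using True by simp
      qed (use True assms in auto)
      also have "\<dots> = c" using pf_card[OF fT, of l] True fT unfolding c_def by auto
      finally show ?thesis using True by simp
    qed
    show "card {g \<in> T \<rightarrow>\<^sub>E B. card T = k \<and> (\<forall>i<k. i+1 \<le> card {j\<in>T. U \<le> g j + l + i})}
          * card {h \<in> (S-T) \<rightarrow>\<^sub>E C. True} = (if card T = k then c else 0) * (U-l-k-1)^(N - card T)"
      using e1 e2 by simp
  qed
  also have "\<dots> = (\<Sum>m\<le>N. (N choose m) * ((if m = k then c else 0) * (U-l-k-1)^(N - m)))"
    using sum_Pow_card[OF fS, of "\<lambda>m. (if m = k then c else 0) * (U-l-k-1)^(N - m)"] unfolding S_def by simp
  also have "\<dots> = (N choose k) * c * (U-l-k-1)^(N-k)"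
  proof (cases "k \<le> N")
    case True
    have "(\<Sum>m\<le>N. (N choose m) * ((if m = k then c else 0) * (U-l-k-1)^(N - m)))
        = (\<Sum>m\<le>N. (if m = k then (N choose k) * c * (U-l-k-1)^(N - k) else 0))"
      by (rule sum.cong) auto
    also have "\<dots> = (N choose k) * c * (U-l-k-1)^(N-k)" using True by (simp add: sum.delta)
    finally show ?thesis .
  next
    case False
    then show ?thesis by (auto intro!: sum.neutral)
  qed
  finally show ?thesis unfolding S_def BC[symmetric] c_def by simp
qed



lemma sum_Ycount:
  assumes "finite V"
  shows "(\<Sum>v\<in>V. Ycount N E v) = card {j\<in>{1..N}. E j \<in> V}"
proof -
  have "{j\<in>{1..N}. E j \<in> V} = (\<Union>v\<in>V. {j\<in>{1..N}. E j = v})" by auto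
  then have "card {j\<in>{1..N}. E j \<in> V} = card (\<Union>v\<in>V. {j\<in>{1..N}. E j = v})" by simp
  also have "\<dots> = (\<Sum>v\<in>V. card {j\<in>{1..N}. E j = v})"
    by (rule card_UN_disjoint) (use assms in auto)
  finally have "card {j\<in>{1..N}. E j \<in> V} = (\<Sum>v\<in>V. card {j\<in>{1..N}. E j = v})" .
  then show ?thesis unfolding Ycount_def by simp
qed

lemma aval_eq:
  assumes E: "E \<in> configs N M"
  shows "avalanche N M (Tmap N M l E) = (LEAST i. card {j\<in>{1..N}. M \<le> E j + l + i} \<le> i)"
proof -
  have "(\<Sum>v\<in>{M - i..M}. Ycount N (Tmap N M l E) v) = card {j\<in>{1..N}. M \<le> E j + l + i}" for i
  proof -
    have "(\<Sum>v\<in>{M - i..M}. Ycount N (Tmap N M l E) v) = card {j\<in>{1..N}. Tmap N M l E j \<in> {M-i..M}}"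
      by (rule sum_Ycount) simp
    also have "{j\<in>{1..N}. Tmap N M l E j \<in> {M-i..M}} = {j\<in>{1..N}. M \<le> E j + l + i}"
    proof -
      have "E j \<le> M" if "j \<in> {1..N}" for j using E that unfolding configs_def by (auto simp: PiE_def Pi_def)
      then show ?thesis unfolding Tmap_def by auto
    qed
    finally show ?thesis .
  qed
  then show ?thesis unfolding avalanche_def by simp
qed

lemma bound_N: "card {j\<in>{1..N::nat}. P j} \<le> N"
proof -
  have "card {j\<in>{1..N::nat}. P j} \<le> card {1..N}" by (rule card_mono) auto
  then show ?thesis by simp
qed

lemma count1:
  assumes "k + l + 1 < M"
  shows "card {E \<in> configs N M. avalanche N M (Tmap N M l E) = k}
       = (N choose k) * (if k = 0 then 1 else (l+1)*(l+k+1)^(k-1)) * (M-l-k-1)^(N-k)"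
proof -
  have key: "avalanche N M (Tmap N M l E) = k \<longleftrightarrow> card {j\<in>{1..N}. M \<le> E j + l + k} \<le> k
            \<and> (\<forall>i<k. i < card {j\<in>{1..N}. M \<le> E j + l + i})" if "E \<in> configs N M" for E
    using aval_eq[OF that, of l] least_char[where G="\<lambda>i. card {j\<in>{1..N}. M \<le> E j + l + i}", OF bound_N] by simp
  have "{E \<in> configs N M. avalanche N M (Tmap N M l E) = k} =
        {f \<in> configs N M. card {j\<in>{1..N}. M \<le> f j + l + k} \<le> k
            \<and> (\<forall>i<k. i < card {j\<in>{1..N}. M \<le> f j + l + i})}"
    using key by blast
  then have seteq: "{E \<in> configs N M. avalanche N M (Tmap N M l E) = k} =
        {f \<in> {1..N} \<rightarrow>\<^sub>E {1..M}. card {j\<in>{1..N}. M \<le> f j + l + k} \<le> k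
            \<and> (\<forall>i<k. i < card {j\<in>{1..N}. M \<le> f j + l + i})}"
    unfolding configs_def by simp
  have kl: "k + l < M" using assms by simp
  show ?thesis unfolding seteq by (rule count_generic[OF kl])
qed

lemma count2:
  assumes "k + l + 1 < M"
  shows "card {E \<in> configs N M. avalanche N M (Tmap N M l E) = k \<and> Ycount N E M = 0}
       = (N choose k) * (if k = 0 then 1 else l*(l+k)^(k-1)) * (M-l-k-1)^(N-k)"
proof -
  have Y0: "E \<in> configs N M \<Longrightarrow> Ycount N E M = 0 \<longleftrightarrow> E \<in> {1..N} \<rightarrow>\<^sub>E {1..M-1}" for E
  proof -
    assume E: "E \<in> configs N M"
    have "Ycount N E M = 0 \<longleftrightarrow> (\<forall>j\<in>{1..N}. E j \<noteq> M)" unfolding Ycount_def by auto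
    also have "\<dots> \<longleftrightarrow> E \<in> {1..N} \<rightarrow>\<^sub>E {1..M-1}" using E unfolding configs_def by (force simp: PiE_iff)
    finally show ?thesis .
  qed
  have sub: "{1..N} \<rightarrow>\<^sub>E {1..M-1} \<subseteq> configs N M" unfolding configs_def by (auto simp: PiE_def Pi_def)
  have key: "avalanche N M (Tmap N M l E) = k \<longleftrightarrow> card {j\<in>{1..N}. M \<le> E j + l + k} \<le> k
            \<and> (\<forall>i<k. i < card {j\<in>{1..N}. M \<le> E j + l + i})" if "E \<in> configs N M" for E
    using aval_eq[OF that, of l] least_char[where G="\<lambda>i. card {j\<in>{1..N}. M \<le> E j + l + i}", OF bound_N] by simp
  have "{E \<in> configs N M. avalanche N M (Tmap N M l E) = k \<and> Ycount N E M = 0} =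
        {f \<in> {1..N} \<rightarrow>\<^sub>E {1..M-1}. card {j\<in>{1..N}. M \<le> f j + l + k} \<le> k
            \<and> (\<forall>i<k. i < card {j\<in>{1..N}. M \<le> f j + l + i})}"
    using key Y0 sub by blast
  also have "card \<dots> = (N choose k) * (if k = 0 then 1 else l*(l+k)^(k-1)) * (M-l-k-1)^(N-k)"
  proof (cases "l \<ge> 1")
    case True
    have "{f \<in> {1..N} \<rightarrow>\<^sub>E {1..M-1}. card {j\<in>{1..N}. M \<le> f j + l + k} \<le> k
            \<and> (\<forall>i<k. i < card {j\<in>{1..N}. M \<le> f j + l + i})} =
          {f \<in> {1..N} \<rightarrow>\<^sub>E {1..M-1}. card {j\<in>{1..N}. M-1 \<le> f j + (l-1) + k} \<le> k
            \<and> (\<forall>i<k. i < card {j\<in>{1..N}. M-1 \<le> f j + (l-1) + i})}"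
    proof -
      have "M \<le> x + l + i \<longleftrightarrow> M-1 \<le> x + (l-1) + i" for x i using True assms by auto
      then show ?thesis by simp
    qed
    moreover have "k + (l-1) < M - 1" using True assms by simp
    ultimately show ?thesis using count_generic[of k "l-1" "M-1" N] True
      by (simp add: Suc_diff_le)
  next
    case False
    then have l0: "l = 0" by simp
    show ?thesis
    proof (cases "k = 0")
      case True
      have "{f \<in> {1..N} \<rightarrow>\<^sub>E {1..M-1}. card {j\<in>{1..N}. M \<le> f j + l + k} \<le> k
            \<and> (\<forall>i<k. i < card {j\<in>{1..N}. M \<le> f j + l + i})} = {1..N} \<rightarrow>\<^sub>E {1..M-1}"
        using True l0 by (auto simp: PiE_def Pi_def)
      then show ?thesis using True l0 by (simp add: card_funcsetE)
    next
      case False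
      have E1: "{f \<in> {1..N} \<rightarrow>\<^sub>E {1..M-1}. card {j\<in>{1..N}. M \<le> f j + l + k} \<le> k
            \<and> (\<forall>i<k. i < card {j\<in>{1..N}. M \<le> f j + l + i})} = {}"
      proof (rule equals0I)
        fix f assume "f \<in> {f \<in> {1..N} \<rightarrow>\<^sub>E {1..M-1}. card {j\<in>{1..N}. M \<le> f j + l + k} \<le> k
            \<and> (\<forall>i<k. i < card {j\<in>{1..N}. M \<le> f j + l + i})}"
        then have f: "f \<in> {1..N} \<rightarrow>\<^sub>E {1..M-1}" "0 < card {j\<in>{1..N}. M \<le> f j + l + 0}"
          using False by auto
        have E0: "{j\<in>{1..N}. M \<le> f j + l + 0} = {}" using f(1) l0 assms by (fastforce simp: PiE_def Pi_def)
        show False using f(2) unfolding E0 by simp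
      qed
      show ?thesis unfolding E1 using False l0 by simp
    qed
  qed
  finally show ?thesis .
qed



theorem mainTheorem1:
  fixes N M k l :: nat and p :: real
  assumes "0 < N" and "N < M" and "p = 1 / real M" and "k + l + 1 < M"
  shows "(measure_pmf.prob (Plam N M l) {E. avalanche N M E = k}
           = real (l + 1) * real (N choose k) * p ^ k
             * (1 - real (k + 1 + l) * p) ^ (N - k) * real (k + 1 + l) powi (int k - 1))
    \<and> (measure_pmf.prob (Punif N M) {E. avalanche N M (Tmap N M l E) = k \<and> Ycount N E M = 0}
           = (if k = 0 then 1 else real l * real (k + l) powi (int k - 1))
             * real (N choose k) * p ^ k * (1 - real (k + 1 + l) * p) ^ (N - k))"
proof -
  have M0: "0 < M" using assms by simp
  have fin: "finite (configs N M)" unfolding configs_def by (simp add: finite_PiE)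
  have ne: "configs N M \<noteq> {}" unfolding configs_def using M0 by (simp add: PiE_eq_empty_iff)
  have cc: "card (configs N M) = M ^ N" unfolding configs_def by (simp add: card_funcsetE)
  define x where "x = M - l - k - 1"
  have hx: "real x = real M - real (k + 1 + l)" unfolding x_def using assms by simp
  have P1: "measure_pmf.prob (Plam N M l) {E. avalanche N M E = k}
      = real (card {E \<in> configs N M. avalanche N M (Tmap N M l E) = k}) / real M ^ N"
  proof -
    have "configs N M \<inter> Tmap N M l -` {E. avalanche N M E = k} = {E \<in> configs N M. avalanche N M (Tmap N M l E) = k}" by auto
    then show ?thesis unfolding Plam_def Punif_def measure_map_pmf
      by (simp add: measure_pmf_of_set[OF ne fin] cc)
  qed
  have P2: "measure_pmf.prob (Punif N M) {E. avalanche N M (Tmap N M l E) = k \<and> Ycount N E M = 0}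
      = real (card {E \<in> configs N M. avalanche N M (Tmap N M l E) = k \<and> Ycount N E M = 0}) / real M ^ N"
  proof -
    have "configs N M \<inter> {E. avalanche N M (Tmap N M l E) = k \<and> Ycount N E M = 0} = {E \<in> configs N M. avalanche N M (Tmap N M l E) = k \<and> Ycount N E M = 0}" by auto
    then show ?thesis unfolding Punif_def
      by (simp add: measure_pmf_of_set[OF ne fin] cc)
  qed
  have F1: "real (if k = 0 then 1 else (l+1)*(l+k+1)^(k-1)) = real (l + 1) * real (k + 1 + l) powi (int k - 1)"
  proof (cases k)
    case 0 then show ?thesis by (simp add: power_int_minus1_right)
  next
    case (Suc k') 
    then have "int k - 1 = int k'" by simp
    then show ?thesis using Suc by (simp add: power_int_of_nat algebra_simps)
  qed
  have F2: "real (if k = 0 then 1 else l*(l+k)^(k-1)) = (if k = 0 then 1 else real l * real (k + l) powi (int k - 1))"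
  proof (cases k)
    case 0 then show ?thesis by simp
  next
    case (Suc k') 
    then have "int k - 1 = int k'" by simp
    then show ?thesis using Suc by (simp add: power_int_of_nat add_ac)
  qed
  show ?thesis
  proof (cases "k \<le> N")
    case False
    then have C0: "N choose k = 0" by simp
    show ?thesis unfolding P1 P2 count1[OF assms(4)] count2[OF assms(4)] C0 by simp
  next
    case True
    have q: "1 - real (k + 1 + l) * p = real x / real M" using hx M0 unfolding assms(3) by (simp add: field_simps)
    have key: "p ^ k * (1 - real (k + 1 + l) * p) ^ (N - k) = real x ^ (N - k) / real M ^ N"
    proof -
      have "p ^ k * (1 - real (k + 1 + l) * p) ^ (N - k) = real x ^ (N - k) / (real M ^ k * real M ^ (N - k))"
        unfolding q by (simp add: assms(3) power_divide)
      also have "real M ^ k * real M ^ (N - k) = real M ^ N" using True by (simp flip: power_add)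
      finally show ?thesis .
    qed
    have A1: "real (card {E \<in> configs N M. avalanche N M (Tmap N M l E) = k}) / real M ^ N
       = real (N choose k) * real (if k = 0 then 1 else (l+1)*(l+k+1)^(k-1)) * (real x ^ (N-k) / real M ^ N)"
      unfolding count1[OF assms(4)] x_def by simp
    have A2: "real (card {E \<in> configs N M. avalanche N M (Tmap N M l E) = k \<and> Ycount N E M = 0}) / real M ^ N
       = real (N choose k) * real (if k = 0 then 1 else l*(l+k)^(k-1)) * (real x ^ (N-k) / real M ^ N)"
      unfolding count2[OF assms(4)] x_def by simp
    show ?thesis
    proof
      show "measure_pmf.prob (Plam N M l) {E. avalanche N M E = k}
           = real (l + 1) * real (N choose k) * p ^ k
             * (1 - real (k + 1 + l) * p) ^ (N - k) * real (k + 1 + l) powi (int k - 1)"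
        unfolding P1 A1 F1 key[symmetric] by (simp only: mult_ac)
      show "measure_pmf.prob (Punif N M) {E. avalanche N M (Tmap N M l E) = k \<and> Ycount N E M = 0}
           = (if k = 0 then 1 else real l * real (k + l) powi (int k - 1))
             * real (N choose k) * p ^ k * (1 - real (k + 1 + l) * p) ^ (N - k)"
        unfolding P2 A2 F2 key[symmetric] by (simp only: mult_ac)
    qed
  qed
qed


end
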